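(* Consider the lattice Boltzmann scheme on $\mathbb{Z}$ described in the context, with bulk operator $\hat{E}(\kappa)$. If the Finite Difference scheme generated by the characteristic polynomial $\det(zI_q-\hat{E}(\kappa))$ is $L^2$ stable (in the sense of the context), then the lattice Boltzmann scheme is $L^2$ stable (in the sense of the context). The converse implication is false in general: there exist lattice Boltzmann schemes of this form which are $L^2$ stable while the associated Finite Difference scheme is not.
   Context: Fix an integer $q\geq 2$, integer velocities $c_1,\dots,c_q\in\mathbb{Z}$, an invertible moment matrix $M\in\mathbb{R}^{q\times q}$, relaxation parameters $s_1\in\mathbb{R}$ and $s_2,\dots,s_q\in(0,2]$, and an equilibrium vector $\epsilon\in\mathbb{R}^q$ with $\epsilon_1=1$. Let $e_i$ denote the canonical basis vectors and set $K:=I_q+\mathrm{diag}(s_1,\dots,s_q)(\epsilon e_1^{\mathsf T}-I_q)$. For $\kappa\in\mathbb{C}\setminus\{0\}$ let $\hat{E}(\kappa):=M\,\mathrm{diag}(\kappa^{-c_1},\dots,\kappa^{-c_q})\,M^{-1}K=\sum_j E_j\kappa^j$, where $E_j:=\sum_{i:\,c_i=-j}Me_ie_i^{\mathsf T}M^{-1}K$. The lattice Boltzmann scheme on $\mathbb{Z}$ acts on moment vectors $m^n_j\in\mathbb{R}^q$ by $m^{n+1}_j=\sum_{k}E_k m^n_{j+k}$, $j\in\mathbb{Z}$, with space step $\Delta x>0$. It is called $L^2$ stable if there is $C>0$ such that for all $\Delta x>0$, all initial data $(m^0_j)_{j\in\mathbb{Z}}\in(\ell^2)^q$ and all $n\in\mathbb{N}$,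 $\sum_{j\in\mathbb{Z}}\Delta x|m^n_j|^2\leq C\sum_{j\in\mathbb{Z}}\Delta x|m^0_j|^2$ (any norm $|\cdot|$ on $\mathbb{R}^q$). Associated Finite Difference scheme: write $\det(zI_q-\hat{E}(\kappa))=z^q+\sum_{\ell=q-1-s}^{q-1}\gamma_\ell(\kappa)z^\ell$, where $s:=\#\{\ell\in\{2,\dots,q\}: s_\ell\neq 1\}$ and the $\gamma_\ell$ are Laurent polynomials in $\kappa$. The scalar scheme is $u^{n+1}_j=-\sum_{\ell=0}^{s}\gamma_{q-\ell-1}(\mathsf T)u^{n-\ell}_j$ for $n\geq s$, $j\in\mathbb{Z}$, where $\mathsf T$ is the forward shift $(\mathsf T u)_j=u_{j+1}$. It is called $L^2$ stable if there is $C>0$ such that for all $\Delta x>0$, all initial data $(u^0_j)_j,\dots,(u^{s-1}_j)_j\in\ell^2$ and all $n\in\mathbb{N}$, $\sum_{j}\Delta x|u^n_j|^2\leq C\sum_{\ell=0}^{s-1}\sum_j\Delta x|u^\ell_j|^2$. *)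

theory Defs
  imports "HOL-Analysis.Analysis" "Jordan_Normal_Form.Determinant"
begin

text \<open>Conventions: indices are 0-based, i.e. the paper's index i in 1..q is i-1 here.
  Velocities c :: nat => int, relaxation parameters sr :: nat => real, equilibrium
  eps :: nat => real (eps 0 = 1 is the paper's epsilon_1 = 1).\<close>

definition minv :: "nat \<Rightarrow> real mat \<Rightarrow> real mat" where
  "minv q M = (SOME B. B \<in> carrier_mat q q \<and> M * B = 1\<^sub>m q \<and> B * M = 1\<^sub>m q)"

definition lbm_params :: "nat \<Rightarrow> (nat \<Rightarrow> int) \<Rightarrow> real mat \<Rightarrow> (nat \<Rightarrow> real) \<Rightarrow> (nat \<Rightarrow> real) \<Rightarrow> bool" where
  "lbm_params q c M sr eps \<longleftrightarrow> q \<ge> 2 \<and> M \<in> carrier_mat q q \<and> invertible_mat M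
     \<and> (\<forall>i. 1 \<le> i \<and> i < q \<longrightarrow> 0 < sr i \<and> sr i \<le> 2) \<and> eps 0 = 1"

text \<open>K = I + diag(s)(eps e_1^T - I).\<close>
definition Kmat :: "nat \<Rightarrow> (nat \<Rightarrow> real) \<Rightarrow> (nat \<Rightarrow> real) \<Rightarrow> real mat" where
  "Kmat q sr eps = mat q q (\<lambda>(i,j). (if i = j then 1 else 0)
      + sr i * ((if j = 0 then eps i else 0) - (if i = j then 1 else 0)))"

definition Ehat :: "nat \<Rightarrow> (nat \<Rightarrow> int) \<Rightarrow> real mat \<Rightarrow> (nat \<Rightarrow> real) \<Rightarrow> (nat \<Rightarrow> real) \<Rightarrow> complex \<Rightarrow> complex mat" where
  "Ehat q c M sr eps \<kappa> =
     map_mat complex_of_real M * mat q q (\<lambda>(i,j). if i = j then \<kappa> powi (- c i) else 0)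
     * map_mat complex_of_real (minv q M) * map_mat complex_of_real (Kmat q sr eps)"

definition Emat :: "nat \<Rightarrow> (nat \<Rightarrow> int) \<Rightarrow> real mat \<Rightarrow> (nat \<Rightarrow> real) \<Rightarrow> (nat \<Rightarrow> real) \<Rightarrow> int \<Rightarrow> real mat" where
  "Emat q c M sr eps k =
     M * mat q q (\<lambda>(i,j). if i = j \<and> c i = - k then 1 else 0) * minv q M * Kmat q sr eps"

definition vsq :: "real vec \<Rightarrow> real" where
  "vsq v = (\<Sum>i<dim_vec v. (v $ i)^2)"

definition lbm_stable :: "nat \<Rightarrow> (nat \<Rightarrow> int) \<Rightarrow> real mat \<Rightarrow> (nat \<Rightarrow> real) \<Rightarrow> (nat \<Rightarrow> real) \<Rightarrow> bool" where
  "lbm_stable q c M sr eps \<longleftrightarrow>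
    (\<exists>C>0. \<forall>dx>0. \<forall>m :: nat \<Rightarrow> int \<Rightarrow> real vec.
       (\<forall>j. dim_vec (m 0 j) = q) \<longrightarrow>
       ((\<lambda>j. vsq (m 0 j)) summable_on UNIV) \<longrightarrow>
       (\<forall>n j. m (Suc n) j = vec q (\<lambda>r. \<Sum>k\<in>(\<lambda>i. - c i) ` {..<q}. (Emat q c M sr eps k *\<^sub>v m n (j + k)) $ r)) \<longrightarrow>
       (\<forall>n. (\<Sum>\<^sub>\<infinity>j. dx * vsq (m n j)) \<le> C * (\<Sum>\<^sub>\<infinity>j. dx * vsq (m 0 j))))"

text \<open>gam l k is the coefficient of kappa^k in the Laurent polynomial gamma_l:
  det(z I - Ehat(kappa)) = z^q + sum_{l<q} gamma_l(kappa) z^l for all kappa ~= 0, z.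
  These coefficients are uniquely determined.\<close>
definition char_coeffs :: "nat \<Rightarrow> (nat \<Rightarrow> int) \<Rightarrow> real mat \<Rightarrow> (nat \<Rightarrow> real) \<Rightarrow> (nat \<Rightarrow> real)
     \<Rightarrow> (nat \<Rightarrow> int \<Rightarrow> real) \<Rightarrow> bool" where
  "char_coeffs q c M sr eps gam \<longleftrightarrow>
     (\<forall>l. finite {k. gam l k \<noteq> 0}) \<and>
     (\<forall>\<kappa> z. \<kappa> \<noteq> 0 \<longrightarrow>
        det (z \<cdot>\<^sub>m 1\<^sub>m q - Ehat q c M sr eps \<kappa>) =
        z ^ q + (\<Sum>l<q. (\<Sum>k\<in>{k. gam l k \<noteq> 0}. complex_of_real (gam l k) * \<kappa> powi k) * z ^ l))"

text \<open>s = number of l in 2..q (paper indexing) with s_l ~= 1.\<close>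
definition num_s :: "nat \<Rightarrow> (nat \<Rightarrow> real) \<Rightarrow> nat" where
  "num_s q sr = card {l. 1 \<le> l \<and> l < q \<and> sr l \<noteq> 1}"

definition apply_shift :: "(int \<Rightarrow> real) \<Rightarrow> (int \<Rightarrow> real) \<Rightarrow> int \<Rightarrow> real" where
  "apply_shift g u j = (\<Sum>k\<in>{k. g k \<noteq> 0}. g k * u (j + k))"

definition fd_stable :: "nat \<Rightarrow> nat \<Rightarrow> (nat \<Rightarrow> int \<Rightarrow> real) \<Rightarrow> bool" where
  "fd_stable q s gam \<longleftrightarrow>
    (\<exists>C>0. \<forall>dx>0. \<forall>u :: nat \<Rightarrow> int \<Rightarrow> real.
       (\<forall>l\<le>s. (\<lambda>j. (u l j)^2) summable_on UNIV) \<longrightarrow>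
       (\<forall>n\<ge>s. \<forall>j. u (Suc n) j = - (\<Sum>l\<le>s. apply_shift (gam (q - l - 1)) (u (n - l)) j)) \<longrightarrow>
       (\<forall>n. (\<Sum>\<^sub>\<infinity>j. dx * (u n j)^2) \<le> C * (\<Sum>l\<le>s. \<Sum>\<^sub>\<infinity>j. dx * (u l j)^2)))"

end

theory Submission
  imports Defs "Jordan_Normal_Form.Char_Poly"
begin

lemma laurent_zero:
  fixes b :: "int \<Rightarrow> real"
  assumes D: "finite D" and Z: "\<And>\<kappa>::complex. \<kappa> \<noteq> 0 \<Longrightarrow> (\<Sum>d\<in>D. complex_of_real (b d) * \<kappa> powi d) = 0"
    and d0: "d0 \<in> D"
  shows "b d0 = 0"
proof -
  obtain N :: nat where N: "\<And>d. d \<in> D \<Longrightarrow> - int N \<le> d"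
  proof
    fix d assume "d \<in> D"
    then have "\<bar>d\<bar> \<le> (\<Sum>e\<in>D. \<bar>e\<bar>)" using D by (intro member_le_sum) auto
    then show "- int (nat (\<Sum>e\<in>D. \<bar>e\<bar>)) \<le> d" by linarith
  qed
  define P :: "complex poly" where "P = (\<Sum>d\<in>D. monom (complex_of_real (b d)) (nat (d + int N)))"
  have ev: "poly P \<kappa> = \<kappa> ^ N * (\<Sum>d\<in>D. complex_of_real (b d) * \<kappa> powi d)" if k: "\<kappa> \<noteq> 0" for \<kappa>
  proof -
    have "poly P \<kappa> = (\<Sum>d\<in>D. complex_of_real (b d) * \<kappa> ^ nat (d + int N))"
      unfolding P_def by (simp add: poly_sum poly_monom)
    also have "\<dots> = (\<Sum>d\<in>D. \<kappa> ^ N * (complex_of_real (b d) * \<kappa> powi d))"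
    proof (rule sum.cong[OF refl])
      fix d assume "d \<in> D"
      then have "d + int N = int (nat (d + int N))" using N[of d] by simp
      then have "\<kappa> ^ nat (d + int N) = \<kappa> powi (d + int N)" by (metis power_int_of_nat)
      also have "\<dots> = \<kappa> powi d * \<kappa> ^ N" using k by (simp add: power_int_add power_int_of_nat)
      finally show "complex_of_real (b d) * \<kappa> ^ nat (d + int N) = \<kappa> ^ N * (complex_of_real (b d) * \<kappa> powi d)"
        by simp
    qed
    finally show ?thesis by (simp add: sum_distrib_left)
  qed
  have "P = 0"
  proof (rule ccontr)
    assume "P \<noteq> 0"
    then have "finite {x. poly P x = 0}" by (rule poly_roots_finite)
    moreover have "- {0} \<subseteq> {x. poly P x = 0}" using ev Z by auto
    ultimately have "finite (- {0::complex})" by (rule finite_subset[rotated])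
    then show False using infinite_UNIV_char_0[where 'a=complex] by simp
  qed
  have "coeff P (nat (d0 + int N)) = (\<Sum>d\<in>D. if d = d0 then complex_of_real (b d) else 0)"
    unfolding P_def coeff_sum
  proof (rule sum.cong[OF refl])
    fix d assume "d \<in> D"
    then show "coeff (monom (complex_of_real (b d)) (nat (d + int N))) (nat (d0 + int N)) =
        (if d = d0 then complex_of_real (b d) else 0)"
      using N[of d] N[OF d0] by (auto simp: coeff_monom)
  qed
  also have "\<dots> = complex_of_real (b d0)" using D d0 by simp
  finally show ?thesis using \<open>P = 0\<close> by simp
qed

lemma group_zero:
  fixes a :: "'i \<Rightarrow> real" and \<sigma> :: "'i \<Rightarrow> int"
  assumes I: "finite I" and Z: "\<And>\<kappa>::complex. \<kappa> \<noteq> 0 \<Longrightarrow> (\<Sum>i\<in>I. complex_of_real (a i) * \<kappa> powi (\<sigma> i)) = 0"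
  shows "(\<Sum>i\<in>I. a i * x (\<sigma> i)) = (0::real)"
proof -
  define b where "b d = (\<Sum>i\<in>{i\<in>I. \<sigma> i = d}. a i)" for d
  have bz: "b d = 0" if "d \<in> \<sigma> ` I" for d
  proof (rule laurent_zero[of "\<sigma> ` I"])
    show "finite (\<sigma> ` I)" using I by simp
    fix \<kappa> :: complex assume k: "\<kappa> \<noteq> 0"
    have "(\<Sum>d\<in>\<sigma> ` I. complex_of_real (b d) * \<kappa> powi d)
        = (\<Sum>d\<in>\<sigma> ` I. (\<Sum>i\<in>{i\<in>I. \<sigma> i = d}. complex_of_real (a i) * \<kappa> powi (\<sigma> i)))"
      unfolding b_def by (auto simp: sum_distrib_right intro!: sum.cong)
    also have "\<dots> = (\<Sum>i\<in>I. complex_of_real (a i) * \<kappa> powi (\<sigma> i))"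
      by (rule sum.image_gen[symmetric]) (rule I)
    finally show "(\<Sum>d\<in>\<sigma> ` I. complex_of_real (b d) * \<kappa> powi d) = 0" using Z[OF k] by simp
  qed (rule that)
  have "(\<Sum>i\<in>I. a i * x (\<sigma> i)) = (\<Sum>d\<in>\<sigma> ` I. (\<Sum>i\<in>{i\<in>I. \<sigma> i = d}. a i * x (\<sigma> i)))"
    by (rule sum.image_gen) (rule I)
  also have "\<dots> = (\<Sum>d\<in>\<sigma> ` I. b d * x d)"
    unfolding b_def by (auto simp: sum_distrib_right intro!: sum.cong)
  also have "\<dots> = 0" using bz by simp
  finally show ?thesis .
qed


lemma coeff_X_mult: "coeff ([:0,1:] * (p :: 'a :: comm_ring_1 poly)) k = (if k = 0 then 0 else coeff p (k - 1))"
  by (cases k) (simp_all add: coeff_pCons)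

lemma coeff_pCons0: "coeff (pCons 0 (p :: 'a :: comm_ring_1 poly)) k = (if k = 0 then 0 else coeff p (k - 1))"
  by (cases k) (simp_all add: coeff_pCons)

lemma cayley_hamilton_entry:
  fixes A :: "'a :: comm_ring_1 mat"
  assumes A: "A \<in> carrier_mat n n" and i: "i < n" and j: "j < n"
  shows "(\<Sum>k\<le>n. coeff (char_poly A) k * (A ^\<^sub>m k) $$ (i,j)) = 0"
proof -
  define CP where "CP = char_poly_matrix A"
  define Adj where "Adj = adj_mat CP"
  have CP: "CP \<in> carrier_mat n n" unfolding CP_def using A by simp
  have Adj: "Adj \<in> carrier_mat n n" unfolding Adj_def using adj_mat(1)[OF CP] .
  have CPAdj: "CP * Adj = char_poly A \<cdot>\<^sub>m 1\<^sub>m n" unfolding Adj_def char_poly_def CP_def[symmetric]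
    using adj_mat(2)[OF CP] .
  define c where "c k = coeff (char_poly A) k" for k
  define Bk where "Bk k = mat n n (\<lambda>(i,j). coeff (Adj $$ (i,j)) k)" for k
  define Bm where "Bm k = (if k = 0 then 0\<^sub>m n n else Bk (k - 1))" for k
  have Bk: "Bk k \<in> carrier_mat n n" for k unfolding Bk_def by simp
  have Bm: "Bm k \<in> carrier_mat n n" for k unfolding Bm_def using Bk by simp
  have CPe: "CP $$ (a,b) = (if a = b then [:0,1:] else 0) + [:- A $$ (a,b):]" if "a < n" "b < n" for a b
    unfolding CP_def char_poly_matrix_def using A that by auto
  have key: "Bm k - A * Bk k = c k \<cdot>\<^sub>m 1\<^sub>m n" for k
  proof (rule eq_matI)
    fix a b assume ab: "a < dim_row (c k \<cdot>\<^sub>m 1\<^sub>m n)" "b < dim_col (c k \<cdot>\<^sub>m 1\<^sub>m n)"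
    then have a: "a < n" and b: "b < n" by auto
    have "coeff ((CP * Adj) $$ (a,b)) k = (\<Sum>l<n. coeff (CP $$ (a,l) * Adj $$ (l,b)) k)"
      using CP Adj a b by (simp add: scalar_prod_def coeff_sum atLeast0LessThan)
    also have "\<dots> = (\<Sum>l<n. (if a = l then (if k = 0 then 0 else coeff (Adj $$ (l,b)) (k - 1)) else 0)
            - A $$ (a,l) * coeff (Adj $$ (l,b)) k)"
    proof (rule sum.cong[OF refl])
      fix l assume "l \<in> {..<n}"
      then have l: "l < n" by simp
      show "coeff (CP $$ (a,l) * Adj $$ (l,b)) k = (if a = l then (if k = 0 then 0 else coeff (Adj $$ (l,b)) (k - 1)) else 0)
            - A $$ (a,l) * coeff (Adj $$ (l,b)) k"
        unfolding CPe[OF a l] by (simp add: distrib_right coeff_X_mult coeff_pCons0)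
    qed
    also have "\<dots> = Bm k $$ (a,b) - (A * Bk k) $$ (a,b)"
      using a b A Bk[of k] by (simp add: Bm_def Bk_def sum_subtractf scalar_prod_def atLeast0LessThan if_distrib sum.delta
          cong: if_cong)
    finally have 1: "coeff ((CP * Adj) $$ (a,b)) k = Bm k $$ (a,b) - (A * Bk k) $$ (a,b)" .
    have 2: "coeff ((CP * Adj) $$ (a,b)) k = (if a = b then c k else 0)"
      unfolding CPAdj using a b by (simp add: c_def)
    show "(Bm k - A * Bk k) $$ (a,b) = (c k \<cdot>\<^sub>m 1\<^sub>m n) $$ (a,b)"
      using 1 2 a b A Bm[of k] Bk[of k] by (cases "a = b") auto
  qed (use A Bm Bk in auto)
  have step: "c k * (A ^\<^sub>m k) $$ (i,j) = (A ^\<^sub>m k * Bm k) $$ (i,j) - (A ^\<^sub>m Suc k * Bk k) $$ (i,j)" for k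
  proof -
    have Ak: "A ^\<^sub>m k \<in> carrier_mat n n" using A by simp
    have "A ^\<^sub>m k * (c k \<cdot>\<^sub>m 1\<^sub>m n) = c k \<cdot>\<^sub>m (A ^\<^sub>m k * 1\<^sub>m n)"
      by (rule mult_smult_distrib[OF Ak one_carrier_mat])
    then have "c k * (A ^\<^sub>m k) $$ (i,j) = (A ^\<^sub>m k * (c k \<cdot>\<^sub>m 1\<^sub>m n)) $$ (i,j)"
      using A Ak i j by (simp add: right_mult_one_mat[OF Ak] carrier_matD)
    also have "\<dots> = (A ^\<^sub>m k * (Bm k - A * Bk k)) $$ (i,j)" unfolding key ..
    also have "A ^\<^sub>m k * (Bm k - A * Bk k) = A ^\<^sub>m k * Bm k - A ^\<^sub>m k * (A * Bk k)"
      using Ak A Bm Bk by (metis mult_carrier_mat mult_minus_distrib_mat)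
    also have "A ^\<^sub>m k * (A * Bk k) = A ^\<^sub>m Suc k * Bk k"
      using Ak A Bk by (simp add: assoc_mult_mat[symmetric, of _ n n _ n _ n])
    finally have F: "c k * (A ^\<^sub>m k) $$ (i,j) = (A ^\<^sub>m k * Bm k - A ^\<^sub>m Suc k * Bk k) $$ (i,j)" .
    have Y: "A ^\<^sub>m Suc k * Bk k \<in> carrier_mat n n" using A Bk[of k] by (metis mult_carrier_mat pow_mat_dim_square carrier_matI carrier_matD)
    show ?thesis unfolding F using Y i j by (subst index_minus_mat(1)) auto
  qed
  define N where "N = Suc (max n (Max ((\<lambda>(a,b). degree (Adj $$ (a,b))) ` ({..<n} \<times> {..<n}))))"
  have BN: "Bk N = 0\<^sub>m n n"
  proof (rule eq_matI)
    fix a b assume "a < dim_row (0\<^sub>m n n :: 'a mat)" "b < dim_col (0\<^sub>m n n :: 'a mat)"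
    then have a: "a < n" and b: "b < n" by auto
    have "degree (Adj $$ (a,b)) \<le> Max ((\<lambda>(a,b). degree (Adj $$ (a,b))) ` ({..<n} \<times> {..<n}))"
      by (rule Max_ge) (use a b in auto)
    then have "degree (Adj $$ (a,b)) < N" unfolding N_def by linarith
    then show "Bk N $$ (a,b) = 0\<^sub>m n n $$ (a,b)" unfolding Bk_def using a b by (simp add: coeff_eq_0)
  qed (auto simp: Bk_def)
  have tel: "(\<Sum>k\<le>N. c k * (A ^\<^sub>m k) $$ (i,j)) = 0"
  proof -
    define T where "T k = (A ^\<^sub>m k * Bm k) $$ (i,j)" for k
    have TS: "T (Suc k) = (A ^\<^sub>m Suc k * Bk k) $$ (i,j)" for k unfolding T_def Bm_def by simp
    have "(\<Sum>k\<le>N. c k * (A ^\<^sub>m k) $$ (i,j)) = (\<Sum>k\<le>N. T k - T (Suc k))"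
      using step TS T_def by simp
    also have "\<dots> = T 0 - T (Suc N)" by (rule sum_telescope)
    also have "T 0 = 0" unfolding T_def Bm_def using A i j by simp
    also have "T (Suc N) = 0" unfolding TS BN using A i j by simp
    finally show ?thesis by simp
  qed
  have "(\<Sum>k\<le>N. c k * (A ^\<^sub>m k) $$ (i,j)) = (\<Sum>k\<le>n. c k * (A ^\<^sub>m k) $$ (i,j))"
  proof -
    have "n \<le> N" unfolding N_def by simp
    moreover have "\<forall>k\<in>{..N} - {..n}. c k = 0" unfolding c_def using degree_monic_char_poly[OF A]
      by (auto intro: coeff_eq_0)
    ultimately show ?thesis by (intro sum.mono_neutral_right) auto
  qed
  then show ?thesis using tel unfolding c_def by simp
qed


lemma sandwich_entry:
  fixes P W :: "'a :: comm_ring_1 mat"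
  assumes P: "P \<in> carrier_mat n n" and W: "W \<in> carrier_mat n n" and i: "i < n" and j: "j < n"
  shows "(P * mat n n (\<lambda>(a,b). if a = b then f a else 0) * W) $$ (i,j) = (\<Sum>a<n. P $$ (i,a) * f a * W $$ (a,j))"
proof -
  let ?D = "mat n n (\<lambda>(a,b). if a = b then f a else 0)"
  have PD: "(P * ?D) $$ (a,b) = P $$ (a,b) * f b" if "a < n" "b < n" for a b
  proof -
    have "(P * ?D) $$ (a,b) = (\<Sum>l<n. P $$ (a,l) * (if l = b then f l else 0))"
      using P that by (simp add: scalar_prod_def atLeast0LessThan)
    also have "\<dots> = (\<Sum>l<n. if l = b then P $$ (a,l) * f l else 0)"
      by (rule sum.cong) auto
    also have "\<dots> = P $$ (a,b) * f b" using that by simp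
    finally show ?thesis .
  qed
  have "(P * ?D * W) $$ (i,j) = (\<Sum>a<n. (P * ?D) $$ (i,a) * W $$ (a,j))"
    using P W i j by (simp add: scalar_prod_def atLeast0LessThan)
  also have "\<dots> = (\<Sum>a<n. P $$ (i,a) * f a * W $$ (a,j))"
    using PD i by (intro sum.cong) auto
  finally show ?thesis .
qed

locale lbm =
  fixes q :: nat and c :: "nat \<Rightarrow> int" and M :: "real mat" and sr eps :: "nat \<Rightarrow> real"
  assumes params: "lbm_params q c M sr eps"
begin

definition "Mi = minv q M"
definition "K = Kmat q sr eps"
definition "Ks = (\<lambda>i. - c i) ` {..<q}"
abbreviation "E k \<equiv> Emat q c M sr eps k"
definition "Zc = {j. 1 \<le> j \<and> j < q \<and> sr j = 1}"
definition "r0 = q - 1 - num_s q sr"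

lemma M: "M \<in> carrier_mat q q" using params unfolding lbm_params_def by auto

lemma q2: "q \<ge> 2" using params unfolding lbm_params_def by auto

lemma Mi: "Mi \<in> carrier_mat q q" "M * Mi = 1\<^sub>m q" "Mi * M = 1\<^sub>m q"
proof -
  from params have inv: "invertible_mat M" unfolding lbm_params_def by auto
  then obtain B where B1: "M * B = 1\<^sub>m (dim_row M)" and B2: "B * M = 1\<^sub>m (dim_row B)"
    unfolding invertible_mat_def inverts_mat_def by auto
  have "dim_col B = q" using arg_cong[OF B1, of dim_col] M by auto
  moreover have "dim_row B = q" using arg_cong[OF B2, of dim_col] M by auto
  ultimately have ex: "\<exists>B. B \<in> carrier_mat q q \<and> M * B = 1\<^sub>m q \<and> B * M = 1\<^sub>m q"
    using B1 B2 M by (intro exI[of _ B]) auto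
  have "Mi \<in> carrier_mat q q \<and> M * Mi = 1\<^sub>m q \<and> Mi * M = 1\<^sub>m q"
    unfolding Mi_def minv_def by (rule someI_ex[OF ex])
  then show "Mi \<in> carrier_mat q q" "M * Mi = 1\<^sub>m q" "Mi * M = 1\<^sub>m q" by auto
qed

lemma K: "K \<in> carrier_mat q q" unfolding K_def Kmat_def by simp

lemma E: "E k \<in> carrier_mat q q"
  unfolding Emat_def using M Mi K unfolding K_def Mi_def by auto

lemma Ks_fin: "finite Ks" unfolding Ks_def by simp

lemma Ehat_carrier: "Ehat q c M sr eps \<kappa> \<in> carrier_mat q q"
  unfolding Ehat_def using M Mi K unfolding K_def Mi_def by auto

lemma Ehat_entry:
  assumes i: "i < q" and j: "j < q"
  shows "Ehat q c M sr eps \<kappa> $$ (i,j) = (\<Sum>k\<in>Ks. \<kappa> powi k * complex_of_real (E k $$ (i,j)))"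
proof -
  define W where "W = Mi * K"
  have W: "W \<in> carrier_mat q q" unfolding W_def using Mi K by auto
  have Wc: "map_mat complex_of_real Mi * map_mat complex_of_real K = map_mat complex_of_real W"
    unfolding W_def using Mi K by (simp add: of_real_hom.mat_hom_mult)
  let ?Mc = "map_mat complex_of_real M"
  let ?D = "mat q q (\<lambda>(i,j). if i = j then \<kappa> powi (- c i) else 0)"
  have "Ehat q c M sr eps \<kappa> = ?Mc * ?D * (map_mat complex_of_real Mi * map_mat complex_of_real K)"
    unfolding Ehat_def K_def[symmetric] Mi_def[symmetric] using M Mi K
    by (subst assoc_mult_mat[of _ q q _ q _ q]) auto
  also have "\<dots> = ?Mc * ?D * map_mat complex_of_real W" unfolding Wc ..
  finally have "Ehat q c M sr eps \<kappa> $$ (i,j) = (\<Sum>a<q. ?Mc $$ (i,a) * \<kappa> powi (- c a) * map_mat complex_of_real W $$ (a,j))"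
    using sandwich_entry[of ?Mc q "map_mat complex_of_real W" i j "\<lambda>a. \<kappa> powi (- c a)"] M W i j by simp
  also have "\<dots> = (\<Sum>a<q. complex_of_real (M $$ (i,a)) * complex_of_real (W $$ (a,j)) * \<kappa> powi (- c a))"
    using M W i j by (intro sum.cong) auto
  finally have L: "Ehat q c M sr eps \<kappa> $$ (i,j) = (\<Sum>a<q. complex_of_real (M $$ (i,a)) * complex_of_real (W $$ (a,j)) * \<kappa> powi (- c a))" .
  have Ek: "E k $$ (i,j) = (\<Sum>a<q. M $$ (i,a) * (if c a = - k then 1 else 0) * W $$ (a,j))" for k
  proof -
    have "E k = M * mat q q (\<lambda>(i,j). if i = j then (if c i = - k then 1 else 0) else 0) * W"
      unfolding Emat_def W_def K_def[symmetric] Mi_def[symmetric] using M Mi K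
      by (subst assoc_mult_mat[of _ q q _ q _ q]) (auto intro!: arg_cong2[where f="(*)"] eq_matI)
    then show ?thesis using sandwich_entry[OF M W i j] by simp
  qed
  have "(\<Sum>k\<in>Ks. \<kappa> powi k * complex_of_real (E k $$ (i,j)))
      = (\<Sum>k\<in>Ks. \<Sum>a<q. complex_of_real (M $$ (i,a)) * complex_of_real (W $$ (a,j)) * (if k = - c a then \<kappa> powi k else 0))"
    unfolding Ek by (auto simp: sum_distrib_left intro!: sum.cong)
  also have "\<dots> = (\<Sum>a<q. complex_of_real (M $$ (i,a)) * complex_of_real (W $$ (a,j)) * (\<Sum>k\<in>Ks. if k = - c a then \<kappa> powi k else 0))"
    by (subst sum.swap) (simp add: sum_distrib_left)
  also have "\<dots> = (\<Sum>a<q. complex_of_real (M $$ (i,a)) * complex_of_real (W $$ (a,j)) * \<kappa> powi (- c a))"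
    using Ks_fin by (intro sum.cong) (auto simp: Ks_def)
  finally show ?thesis using L by simp
qed

end

lemma mult_diag_entry:
  fixes P :: "'a :: comm_ring_1 mat"
  assumes P: "P \<in> carrier_mat n n" and a: "a < n" and b: "b < n"
  shows "(P * mat n n (\<lambda>(a,b). if a = b then f a else 0)) $$ (a,b) = P $$ (a,b) * f b"
proof -
  have "(P * mat n n (\<lambda>(a,b). if a = b then f a else 0)) $$ (a,b) = (\<Sum>l<n. P $$ (a,l) * (if l = b then f l else 0))"
    using P a b by (simp add: scalar_prod_def atLeast0LessThan)
  also have "\<dots> = (\<Sum>l<n. if l = b then P $$ (a,l) * f l else 0)"
    by (rule sum.cong) auto
  also have "\<dots> = P $$ (a,b) * f b" using b by simp
  finally show ?thesis .
qed

lemma coeff_Xpow_mult: "l < r \<Longrightarrow> coeff ([:0,1:]^r * (p :: 'a :: comm_ring_1 poly)) l = 0"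
proof (induction r arbitrary: l)
  case 0 then show ?case by simp
next
  case (Suc r)
  have "[:0,1:]^Suc r * p = [:0,1:] * ([:0,1:]^r * p)" by (simp add: mult.assoc)
  then show ?case using Suc by (cases l) (auto simp: coeff_X_mult)
qed

context lbm
begin

lemma Ehat_Zc: assumes i: "i < q" and j: "j \<in> Zc" shows "Ehat q c M sr eps \<kappa> $$ (i,j) = 0"
proof -
  have jq: "j < q" "j \<noteq> 0" "sr j = 1" using j unfolding Zc_def by auto
  have Kcol: "K $$ (l,j) = 0" if "l < q" for l
    unfolding K_def Kmat_def using that jq by auto
  let ?X = "map_mat complex_of_real M * mat q q (\<lambda>(i,j). if i = j then \<kappa> powi (- c i) else 0) * map_mat complex_of_real Mi"
  have X: "?X \<in> carrier_mat q q" using M Mi by auto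
  have dX: "dim_row ?X = q" "dim_col ?X = q" using X by auto
  have dK: "dim_row K = q" "dim_col K = q" using K by auto
  have "Ehat q c M sr eps \<kappa> = ?X * map_mat complex_of_real K"
    unfolding Ehat_def K_def Mi_def ..
  then have "Ehat q c M sr eps \<kappa> $$ (i,j) = row ?X i \<bullet> col (map_mat complex_of_real K) j"
    using dX dK i jq by simp
  also have "\<dots> = (\<Sum>l<q. ?X $$ (i,l) * complex_of_real (K $$ (l,j)))"
    unfolding scalar_prod_def using dX dK i jq by (simp add: atLeast0LessThan)
  also have "\<dots> = 0" using Kcol by simp
  finally show ?thesis .
qed

lemma char_poly_factor:
  "\<exists>N. char_poly (Ehat q c M sr eps \<kappa>) = [:0,1:] ^ card Zc * N"
proof -
  define A where "A = Ehat q c M sr eps \<kappa>"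
  have A: "A \<in> carrier_mat q q" unfolding A_def by (rule Ehat_carrier)
  define CP where "CP = char_poly_matrix A"
  have CP: "CP \<in> carrier_mat q q" unfolding CP_def using A by simp
  have CPe: "CP $$ (a,b) = (if a = b then [:0,1:] else 0) + [:- A $$ (a,b):]" if "a < q" "b < q" for a b
    unfolding CP_def char_poly_matrix_def using A that by auto
  define N where "N = mat q q (\<lambda>(i,j). if j \<in> Zc then (if i = j then 1 else 0) else CP $$ (i,j))"
  define d :: "nat \<Rightarrow> complex poly" where "d j = (if j \<in> Zc then [:0,1:] else 1)" for j
  define Dg :: "complex poly mat" where "Dg = mat q q (\<lambda>(i,j). if i = j then d i else 0)"
  have N: "N \<in> carrier_mat q q" unfolding N_def by simp
  have Dg: "Dg \<in> carrier_mat q q" unfolding Dg_def by simp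
  have NDg: "CP = N * Dg"
  proof (rule eq_matI)
    fix a b assume ab: "a < dim_row (N * Dg)" "b < dim_col (N * Dg)"
    then have a: "a < q" and b: "b < q" using N Dg by auto
    have "(N * Dg) $$ (a,b) = N $$ (a,b) * d b"
      unfolding Dg_def by (rule mult_diag_entry[OF N a b])
    also have "\<dots> = CP $$ (a,b)"
    proof (cases "b \<in> Zc")
      case True
      have "A $$ (a,b) = 0" unfolding A_def by (rule Ehat_Zc[OF a True])
      then have "CP $$ (a,b) = (if a = b then [:0,1:] else 0)" using CPe[OF a b] by simp
      moreover have "N $$ (a,b) = (if a = b then 1 else 0)" unfolding N_def using a b True by simp
      ultimately show ?thesis using True unfolding d_def by simp
    next
      case False
      then show ?thesis unfolding N_def d_def using a b by simp
    qed
    finally show "CP $$ (a,b) = (N * Dg) $$ (a,b)" ..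
  qed (use CP N Dg in auto)
  have detDg: "det Dg = [:0,1:] ^ card Zc"
  proof -
    have ut: "upper_triangular Dg" unfolding Dg_def upper_triangular_def by auto
    have "det Dg = prod_list (diag_mat Dg)" by (rule det_upper_triangular[OF ut Dg])
    also have "diag_mat Dg = map d [0..<q]"
      unfolding diag_mat_def Dg_def by simp
    also have "prod_list (map d [0..<q]) = prod d {0..<q}"
      by (metis distinct_upt prod.distinct_set_conv_list set_upt)
    also have "\<dots> = [:0,1:] ^ card ({0..<q} \<inter> Zc)"
      unfolding d_def by (simp add: prod.If_cases)
    also have "{0..<q} \<inter> Zc = Zc" unfolding Zc_def by auto
    finally show ?thesis .
  qed
  have "char_poly A = det N * det Dg"
    unfolding char_poly_def CP_def[symmetric] NDg by (rule det_mult[OF N Dg])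
  then have "char_poly A = [:0,1:] ^ card Zc * det N" unfolding detDg by (simp only: mult.commute)
  then show ?thesis unfolding A_def by blast
qed

lemma card_Zc: "card Zc = r0"
proof -
  define S where "S = {l. 1 \<le> l \<and> l < q \<and> sr l \<noteq> 1}"
  have "Zc \<union> S = {1..<q}" unfolding Zc_def S_def by auto
  moreover have "Zc \<inter> S = {}" unfolding Zc_def S_def by auto
  moreover have "finite Zc" "finite S" unfolding Zc_def S_def by auto
  ultimately have "card Zc + card S = q - 1" by (metis card_Un_disjoint card_atLeastLessThan)
  then show ?thesis unfolding r0_def num_s_def S_def[symmetric] by simp
qed

lemma low_coeff: "l < r0 \<Longrightarrow> coeff (char_poly (Ehat q c M sr eps \<kappa>)) l = 0"
  using char_poly_factor[of \<kappa>] coeff_Xpow_mult card_Zc by metis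

definition gamma :: "(nat \<Rightarrow> int \<Rightarrow> real) \<Rightarrow> nat \<Rightarrow> complex \<Rightarrow> complex" where
  "gamma gam l \<kappa> = (\<Sum>k\<in>{k. gam l k \<noteq> 0}. complex_of_real (gam l k) * \<kappa> powi k)"

lemma char_poly_coeffs:
  assumes cc: "char_coeffs q c M sr eps gam" and k: "\<kappa> \<noteq> 0" and l: "l < q"
  shows "coeff (char_poly (Ehat q c M sr eps \<kappa>)) l = gamma gam l \<kappa>"
proof -
  define A where "A = Ehat q c M sr eps \<kappa>"
  have A: "A \<in> carrier_mat q q" unfolding A_def by (rule Ehat_carrier)
  define P where "P = monom 1 q + (\<Sum>l<q. monom (gamma gam l \<kappa>) l)"
  have "poly (char_poly A) z = poly P z" for z
  proof -
    have "- char_matrix A z = z \<cdot>\<^sub>m 1\<^sub>m q - A"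
      unfolding char_matrix_def using A by (intro eq_matI) auto
    then have "poly (char_poly A) z = det (z \<cdot>\<^sub>m 1\<^sub>m q - A)"
      using char_poly_matrix[OF A] by simp
    also have "\<dots> = z ^ q + (\<Sum>l<q. gamma gam l \<kappa> * z ^ l)"
      using cc k unfolding char_coeffs_def gamma_def A_def by auto
    also have "\<dots> = poly P z" unfolding P_def by (simp add: poly_sum poly_monom)
    finally show ?thesis .
  qed
  then have "char_poly A = P" using poly_eq_poly_eq_iff by blast
  moreover have "coeff P l = gamma gam l \<kappa>"
    unfolding P_def using l by (simp add: coeff_sum coeff_monom)
  ultimately show ?thesis unfolding A_def by simp
qed

lemma ch_reduced:
  assumes cc: "char_coeffs q c M sr eps gam" and k: "\<kappa> \<noteq> 0" and i: "i < q" and j: "j < q"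
  shows "(Ehat q c M sr eps \<kappa> ^\<^sub>m q) $$ (i,j) + (\<Sum>l\<in>{r0..<q}. gamma gam l \<kappa> * (Ehat q c M sr eps \<kappa> ^\<^sub>m l) $$ (i,j)) = 0"
proof -
  define A where "A = Ehat q c M sr eps \<kappa>"
  have A: "A \<in> carrier_mat q q" unfolding A_def by (rule Ehat_carrier)
  define cf where "cf l = coeff (char_poly A) l" for l
  have "0 = (\<Sum>l\<le>q. cf l * (A ^\<^sub>m l) $$ (i,j))"
    unfolding cf_def using cayley_hamilton_entry[OF A i j] by simp
  also have "\<dots> = (\<Sum>l<q. cf l * (A ^\<^sub>m l) $$ (i,j)) + cf q * (A ^\<^sub>m q) $$ (i,j)"
    by (simp add: lessThan_Suc_atMost[symmetric])
  also have "cf q = 1" unfolding cf_def using degree_monic_char_poly[OF A] by simp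
  also have "(\<Sum>l<q. cf l * (A ^\<^sub>m l) $$ (i,j)) = (\<Sum>l\<in>{r0..<q}. cf l * (A ^\<^sub>m l) $$ (i,j))"
  proof (rule sum.mono_neutral_right)
    show "\<forall>l\<in>{..<q} - {r0..<q}. cf l * (A ^\<^sub>m l) $$ (i,j) = 0"
      unfolding cf_def A_def using low_coeff by auto
  qed auto
  also have "\<dots> = (\<Sum>l\<in>{r0..<q}. gamma gam l \<kappa> * (A ^\<^sub>m l) $$ (i,j))"
    unfolding cf_def A_def using char_poly_coeffs[OF cc k] by (intro sum.cong) auto
  finally have F: "0 = (\<Sum>l\<in>{r0..<q}. gamma gam l \<kappa> * (A ^\<^sub>m l) $$ (i,j)) + 1 * (A ^\<^sub>m q) $$ (i,j)" .
  show ?thesis unfolding A_def[symmetric] using F by (simp add: add.commute)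
qed

end

lemma group_zero2:
  fixes a :: "'i \<Rightarrow> real" and \<sigma> :: "'i \<Rightarrow> int" and b :: "'j \<Rightarrow> real" and \<tau> :: "'j \<Rightarrow> int"
  assumes I: "finite I" and J: "finite J"
    and Z: "\<And>\<kappa>::complex. \<kappa> \<noteq> 0 \<Longrightarrow> (\<Sum>i\<in>I. complex_of_real (a i) * \<kappa> powi (\<sigma> i)) + (\<Sum>j\<in>J. complex_of_real (b j) * \<kappa> powi (\<tau> j)) = 0"
  shows "(\<Sum>i\<in>I. a i * x (\<sigma> i)) + (\<Sum>j\<in>J. b j * x (\<tau> j)) = (0::real)"
proof -
  define a' where "a' = case_sum a b"
  define \<sigma>' where "\<sigma>' = case_sum \<sigma> \<tau>"
  have "(\<Sum>i\<in>I <+> J. a' i * x (\<sigma>' i)) = 0"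
  proof (rule group_zero)
    show "finite (I <+> J)" using I J by simp
    fix \<kappa> :: complex assume k: "\<kappa> \<noteq> 0"
    show "(\<Sum>i\<in>I <+> J. complex_of_real (a' i) * \<kappa> powi (\<sigma>' i)) = 0"
      using Z[OF k] I J by (simp add: sum.Plus a'_def \<sigma>'_def comp_def)
  qed
  then show ?thesis using I J by (simp add: sum.Plus a'_def \<sigma>'_def comp_def)
qed

lemma pow_mat_Suc_left: "A \<in> carrier_mat n n \<Longrightarrow> A ^\<^sub>m Suc t = A * A ^\<^sub>m t"
proof (induction t)
  case 0 then show ?case by simp
next
  case (Suc t)
  have "A ^\<^sub>m Suc (Suc t) = A ^\<^sub>m Suc t * A" by simp
  also have "\<dots> = (A * A ^\<^sub>m t) * A" using Suc by simp
  also have "\<dots> = A * (A ^\<^sub>m t * A)" using Suc.prems by (simp add: assoc_mult_mat[of _ n n _ n _ n])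
  finally show ?case by simp
qed

context lbm
begin

definition W :: "nat \<Rightarrow> int list set" where "W t = {w. length w = t \<and> set w \<subseteq> Ks}"
definition Ew :: "int list \<Rightarrow> real mat" where "Ew w = foldr (\<lambda>k A. E k * A) w (1\<^sub>m q)"

lemma Ew_simps[simp]: "Ew [] = 1\<^sub>m q" "Ew (k # w) = E k * Ew w"
  unfolding Ew_def by simp_all

lemma Ew_carrier: "Ew w \<in> carrier_mat q q"
  by (induction w) (auto intro!: mult_carrier_mat[OF E])

lemma W_fin: "finite (W t)"
proof -
  have "W t = {xs. set xs \<subseteq> Ks \<and> length xs = t}" unfolding W_def by auto
  then show ?thesis using finite_lists_length_eq[OF Ks_fin] by simp
qed

lemma W_0: "W 0 = {[]}" unfolding W_def by auto

lemma W_Suc: "W (Suc t) = (\<lambda>(k,w). k # w) ` (Ks \<times> W t)"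
proof
  show "W (Suc t) \<subseteq> (\<lambda>(k,w). k # w) ` (Ks \<times> W t)"
  proof
    fix w' assume "w' \<in> W (Suc t)"
    then obtain k w where "w' = k # w" "k \<in> Ks" "w \<in> W t" unfolding W_def by (cases w') auto
    then show "w' \<in> (\<lambda>(k,w). k # w) ` (Ks \<times> W t)" by force
  qed
qed (auto simp: W_def)

lemma sum_W_Suc: "(\<Sum>w'\<in>W (Suc t). f w') = (\<Sum>k\<in>Ks. \<Sum>w\<in>W t. f (k # w))"
proof -
  have inj: "inj_on (\<lambda>(k,w). k # w) (Ks \<times> W t)" by (auto simp: inj_on_def)
  have "(\<Sum>w'\<in>W (Suc t). f w') = (\<Sum>(k,w)\<in>Ks \<times> W t. f (k # w))"
    unfolding W_Suc by (subst sum.reindex[OF inj]) (simp add: case_prod_unfold comp_def)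
  also have "\<dots> = (\<Sum>k\<in>Ks. \<Sum>w\<in>W t. f (k # w))"
    by (rule sum.cartesian_product[symmetric])
  finally show ?thesis .
qed

lemma mv_entry: assumes A: "A \<in> carrier_mat q q" and v: "dim_vec v = q" and r: "r < q"
  shows "(A *\<^sub>v v) $ r = (\<Sum>c'<q. A $$ (r,c') * v $ c')"
  using A v r by (simp add: scalar_prod_def atLeast0LessThan)

definition lbm_sol :: "(nat \<Rightarrow> int \<Rightarrow> real vec) \<Rightarrow> bool" where
  "lbm_sol m \<longleftrightarrow> (\<forall>j. dim_vec (m 0 j) = q) \<and>
     (\<forall>n j. m (Suc n) j = vec q (\<lambda>r. \<Sum>k\<in>Ks. (E k *\<^sub>v m n (j + k)) $ r))"

lemma sol_dim: "lbm_sol m \<Longrightarrow> dim_vec (m n j) = q"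
  unfolding lbm_sol_def by (cases n) auto

lemma sol_step: assumes m: "lbm_sol m" and r: "r < q"
  shows "m (Suc n) j $ r = (\<Sum>k\<in>Ks. \<Sum>c'<q. E k $$ (r,c') * m n (j + k) $ c')"
proof -
  have "m (Suc n) j $ r = (\<Sum>k\<in>Ks. (E k *\<^sub>v m n (j + k)) $ r)"
    using m r unfolding lbm_sol_def by simp
  also have "\<dots> = (\<Sum>k\<in>Ks. \<Sum>c'<q. E k $$ (r,c') * m n (j + k) $ c')"
    using mv_entry[OF E sol_dim[OF m] r] by simp
  finally show ?thesis .
qed

lemma sol_expand: assumes m: "lbm_sol m"
  shows "r < q \<Longrightarrow> m (n + t) j $ r = (\<Sum>w\<in>W t. \<Sum>c'<q. Ew w $$ (r,c') * m n (j + sum_list w) $ c')"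
proof (induction t arbitrary: j r)
  case 0
  have "(\<Sum>c'<q. (1\<^sub>m q :: real mat) $$ (r,c') * m n j $ c') = (\<Sum>c'<q. if c' = r then m n j $ c' else 0)"
    using 0 by (intro sum.cong) auto
  also have "\<dots> = m n j $ r" using 0 by simp
  finally show ?case by (simp add: W_0)
next
  case (Suc t)
  have "m (n + Suc t) j $ r = (\<Sum>k\<in>Ks. \<Sum>c'<q. E k $$ (r,c') * m (n + t) (j + k) $ c')"
    using sol_step[OF m Suc.prems] by simp
  also have "\<dots> = (\<Sum>k\<in>Ks. \<Sum>c'<q. E k $$ (r,c') * (\<Sum>w\<in>W t. \<Sum>c''<q. Ew w $$ (c',c'') * m n (j + k + sum_list w) $ c''))"
    using Suc.IH by simp
  also have "\<dots> = (\<Sum>k\<in>Ks. \<Sum>w\<in>W t. \<Sum>c''<q. (\<Sum>c'<q. E k $$ (r,c') * Ew w $$ (c',c'')) * m n (j + k + sum_list w) $ c'')"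
  proof (rule sum.cong[OF refl])
    fix k
    show "(\<Sum>c'<q. E k $$ (r,c') * (\<Sum>w\<in>W t. \<Sum>c''<q. Ew w $$ (c',c'') * m n (j + k + sum_list w) $ c'')) =
      (\<Sum>w\<in>W t. \<Sum>c''<q. (\<Sum>c'<q. E k $$ (r,c') * Ew w $$ (c',c'')) * m n (j + k + sum_list w) $ c'')"
    proof -
      let ?x = "\<lambda>w c''. m n (j + k + sum_list w) $ c''"
      have "(\<Sum>c'<q. E k $$ (r,c') * (\<Sum>w\<in>W t. \<Sum>c''<q. Ew w $$ (c',c'') * ?x w c''))
          = (\<Sum>c'<q. \<Sum>w\<in>W t. \<Sum>c''<q. E k $$ (r,c') * Ew w $$ (c',c'') * ?x w c'')"
        by (simp add: sum_distrib_left mult.assoc)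
      also have "\<dots> = (\<Sum>w\<in>W t. \<Sum>c'<q. \<Sum>c''<q. E k $$ (r,c') * Ew w $$ (c',c'') * ?x w c'')"
        by (rule sum.swap)
      also have "\<dots> = (\<Sum>w\<in>W t. \<Sum>c''<q. \<Sum>c'<q. E k $$ (r,c') * Ew w $$ (c',c'') * ?x w c'')"
      proof (rule sum.cong[OF refl])
        fix w
        show "(\<Sum>c'<q. \<Sum>c''<q. E k $$ (r,c') * Ew w $$ (c',c'') * ?x w c'') = (\<Sum>c''<q. \<Sum>c'<q. E k $$ (r,c') * Ew w $$ (c',c'') * ?x w c'')"
          by (rule sum.swap[of "\<lambda>c' c''. E k $$ (r,c') * Ew w $$ (c',c'') * ?x w c''"])
      qed
      also have "\<dots> = (\<Sum>w\<in>W t. \<Sum>c''<q. (\<Sum>c'<q. E k $$ (r,c') * Ew w $$ (c',c'')) * ?x w c'')"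
        by (simp add: sum_distrib_right)
      finally show ?thesis .
    qed
  qed
  also have "\<dots> = (\<Sum>k\<in>Ks. \<Sum>w\<in>W t. \<Sum>c''<q. Ew (k # w) $$ (r,c'') * m n (j + sum_list (k # w)) $ c'')"
  proof (intro sum.cong refl)
    fix k w c'' assume "c'' \<in> {..<q}"
    then have "(E k * Ew w) $$ (r,c'') = (\<Sum>c'<q. E k $$ (r,c') * Ew w $$ (c',c''))"
      using E[of k] Ew_carrier[of w] Suc.prems by (simp add: scalar_prod_def atLeast0LessThan)
    then show "(\<Sum>c'<q. E k $$ (r,c') * Ew w $$ (c',c'')) * m n (j + k + sum_list w) $ c'' =
          Ew (k # w) $$ (r,c'') * m n (j + sum_list (k # w)) $ c''"
      by (simp add: add.assoc)
  qed
  also have "\<dots> = (\<Sum>w\<in>W (Suc t). \<Sum>c''<q. Ew w $$ (r,c'') * m n (j + sum_list w) $ c'')"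
    by (rule sum_W_Suc[symmetric])
  finally show ?case .
qed

lemma symbol_pow: assumes k: "\<kappa> \<noteq> 0" and i: "i < q" and j: "j < q"
  shows "(Ehat q c M sr eps \<kappa> ^\<^sub>m t) $$ (i,j) = (\<Sum>w\<in>W t. \<kappa> powi (sum_list w) * complex_of_real (Ew w $$ (i,j)))"
  using i j
proof (induction t arbitrary: i j)
  case 0
  have "(\<Sum>w\<in>W 0. \<kappa> powi (sum_list w) * complex_of_real (Ew w $$ (i,j))) = (if i = j then 1 else 0)"
    using 0 by (simp add: W_0)
  then show ?case using 0 Ehat_carrier[of \<kappa>] by auto
next
  case (Suc t)
  let ?A = "Ehat q c M sr eps \<kappa>"
  have A: "?A \<in> carrier_mat q q" by (rule Ehat_carrier)
  have "(?A ^\<^sub>m Suc t) $$ (i,j) = (?A * ?A ^\<^sub>m t) $$ (i,j)" using pow_mat_Suc_left[OF A] by simp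
  also have "\<dots> = (\<Sum>l<q. ?A $$ (i,l) * (?A ^\<^sub>m t) $$ (l,j))"
    using A Suc.prems by (simp add: scalar_prod_def atLeast0LessThan)
  also have "\<dots> = (\<Sum>l<q. (\<Sum>k\<in>Ks. \<kappa> powi k * complex_of_real (E k $$ (i,l))) *
        (\<Sum>w\<in>W t. \<kappa> powi (sum_list w) * complex_of_real (Ew w $$ (l,j))))"
    using Suc.IH Suc.prems Ehat_entry by simp
  also have "\<dots> = (\<Sum>k\<in>Ks. \<Sum>w\<in>W t. \<kappa> powi (k + sum_list w) * complex_of_real (\<Sum>l<q. E k $$ (i,l) * Ew w $$ (l,j)))"
  proof -
    let ?a = "\<lambda>k l. \<kappa> powi k * complex_of_real (E k $$ (i,l))"
    let ?b = "\<lambda>w l. \<kappa> powi (sum_list w) * complex_of_real (Ew w $$ (l,j))"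
    have "(\<Sum>l<q. (\<Sum>k\<in>Ks. ?a k l) * (\<Sum>w\<in>W t. ?b w l)) = (\<Sum>l<q. \<Sum>k\<in>Ks. \<Sum>w\<in>W t. ?a k l * ?b w l)"
      by (simp add: sum_product)
    also have "\<dots> = (\<Sum>k\<in>Ks. \<Sum>l<q. \<Sum>w\<in>W t. ?a k l * ?b w l)" by (rule sum.swap)
    also have "\<dots> = (\<Sum>k\<in>Ks. \<Sum>w\<in>W t. \<Sum>l<q. ?a k l * ?b w l)" by (intro sum.cong refl) (rule sum.swap)
    also have "\<dots> = (\<Sum>k\<in>Ks. \<Sum>w\<in>W t. \<kappa> powi (k + sum_list w) * complex_of_real (\<Sum>l<q. E k $$ (i,l) * Ew w $$ (l,j)))"
    proof (intro sum.cong refl)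
      fix k w
      have "\<kappa> powi (k + sum_list w) = \<kappa> powi k * \<kappa> powi (sum_list w)" using k by (simp add: power_int_add)
      then show "(\<Sum>l<q. ?a k l * ?b w l) = \<kappa> powi (k + sum_list w) * complex_of_real (\<Sum>l<q. E k $$ (i,l) * Ew w $$ (l,j))"
        by (simp add: sum_distrib_left mult_ac)
    qed
    finally show ?thesis .
  qed
  also have "\<dots> = (\<Sum>k\<in>Ks. \<Sum>w\<in>W t. \<kappa> powi (sum_list (k # w)) * complex_of_real (Ew (k # w) $$ (i,j)))"
  proof (intro sum.cong refl)
    fix k w
    have "(E k * Ew w) $$ (i,j) = (\<Sum>l<q. E k $$ (i,l) * Ew w $$ (l,j))"
      using E[of k] Ew_carrier[of w] Suc.prems by (simp add: scalar_prod_def atLeast0LessThan)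
    then show "\<kappa> powi (k + sum_list w) * complex_of_real (\<Sum>l<q. E k $$ (i,l) * Ew w $$ (l,j)) =
        \<kappa> powi (sum_list (k # w)) * complex_of_real (Ew (k # w) $$ (i,j))" by simp
  qed
  also have "\<dots> = (\<Sum>w\<in>W (Suc t). \<kappa> powi (sum_list w) * complex_of_real (Ew w $$ (i,j)))"
    by (rule sum_W_Suc[symmetric])
  finally show ?case .
qed

end

lemma sum_Sigma3:
  assumes "finite L" "\<And>l. l \<in> L \<Longrightarrow> finite (G l)" "\<And>l. l \<in> L \<Longrightarrow> finite (V l)"
  shows "(\<Sum>l\<in>L. \<Sum>k\<in>G l. \<Sum>w\<in>V l. f l k w) = (\<Sum>p\<in>(SIGMA l:L. G l \<times> V l). case p of (l,k,w) \<Rightarrow> f l k w)"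
proof -
  have 1: "(\<Sum>k\<in>G l. \<Sum>w\<in>V l. f l k w) = (\<Sum>kw\<in>G l \<times> V l. f l (fst kw) (snd kw))" for l
    by (simp add: sum.cartesian_product case_prod_unfold)
  have 2: "(\<Sum>l\<in>L. \<Sum>kw\<in>G l \<times> V l. g l kw) = (\<Sum>p\<in>(SIGMA l:L. G l \<times> V l). g (fst p) (snd p))" for g
    using assms by (subst sum.Sigma) (auto simp: case_prod_unfold)
  show ?thesis unfolding 1 2 by (simp add: case_prod_unfold)
qed

context lbm
begin

lemma combine:
  fixes m :: "nat \<Rightarrow> int \<Rightarrow> real vec"
  assumes m: "lbm_sol m" and cc: "char_coeffs q c M sr eps gam" and r: "r < q"
  shows "m (n + q) j $ r + (\<Sum>l\<in>{r0..<q}. \<Sum>k\<in>{k. gam l k \<noteq> 0}. gam l k * m (n + l) (j + k) $ r) = 0"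
proof -
  define G where "G l = {k. gam l k \<noteq> 0}" for l
  have Gfin: "finite (G l)" for l using cc unfolding char_coeffs_def G_def by auto
  define J where "J = (SIGMA l:{r0..<q}. G l \<times> W l)"
  have Jfin: "finite J" unfolding J_def using Gfin W_fin by auto
  define x where "x c' d = m n (j + d) $ c'" for c' d
  define b where "b c' = (\<lambda>(l,k,w). gam l k * Ew w $$ (r,c'))" for c'
  define \<tau> :: "nat \<times> int \<times> int list \<Rightarrow> int" where "\<tau> = (\<lambda>(l,k,w). k + sum_list w)"
  have e1: "m (n + q) j $ r = (\<Sum>c'<q. \<Sum>w\<in>W q. Ew w $$ (r,c') * x c' (sum_list w))"
    unfolding x_def using sol_expand[OF m r] by (subst sum.swap) simp
  have "(\<Sum>l\<in>{r0..<q}. \<Sum>k\<in>G l. gam l k * m (n + l) (j + k) $ r)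
      = (\<Sum>l\<in>{r0..<q}. \<Sum>k\<in>G l. \<Sum>w\<in>W l. \<Sum>c'<q. gam l k * (Ew w $$ (r,c') * x c' (k + sum_list w)))"
    unfolding x_def using sol_expand[OF m r] by (simp add: sum_distrib_left add.assoc)
  also have "\<dots> = (\<Sum>p\<in>J. case p of (l,k,w) \<Rightarrow> \<Sum>c'<q. gam l k * (Ew w $$ (r,c') * x c' (k + sum_list w)))"
    unfolding J_def by (rule sum_Sigma3) (use Gfin W_fin in auto)
  also have "\<dots> = (\<Sum>p\<in>J. \<Sum>c'<q. b c' p * x c' (\<tau> p))"
    unfolding b_def \<tau>_def by (intro sum.cong refl) (auto simp: mult_ac)
  also have "\<dots> = (\<Sum>c'<q. \<Sum>p\<in>J. b c' p * x c' (\<tau> p))" by (rule sum.swap)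
  finally have e2: "(\<Sum>l\<in>{r0..<q}. \<Sum>k\<in>G l. gam l k * m (n + l) (j + k) $ r) = (\<Sum>c'<q. \<Sum>p\<in>J. b c' p * x c' (\<tau> p))" .
  have zero: "(\<Sum>w\<in>W q. Ew w $$ (r,c') * x c' (sum_list w)) + (\<Sum>p\<in>J. b c' p * x c' (\<tau> p)) = 0" if c': "c' < q" for c'
  proof (rule group_zero2[OF W_fin Jfin])
    fix \<kappa> :: complex assume k: "\<kappa> \<noteq> 0"
    let ?A = "Ehat q c M sr eps \<kappa>"
    have s1: "(\<Sum>w\<in>W q. complex_of_real (Ew w $$ (r,c')) * \<kappa> powi (sum_list w)) = (?A ^\<^sub>m q) $$ (r,c')"
      using symbol_pow[OF k r c'] by (simp add: mult.commute)
    have "(\<Sum>p\<in>J. complex_of_real (b c' p) * \<kappa> powi (\<tau> p))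
        = (\<Sum>p\<in>J. case p of (l,k,w) \<Rightarrow> complex_of_real (gam l k) * \<kappa> powi k * (\<kappa> powi (sum_list w) * complex_of_real (Ew w $$ (r,c'))))"
      unfolding b_def \<tau>_def using k by (intro sum.cong refl) (auto simp: power_int_add mult_ac)
    also have "\<dots> = (\<Sum>l\<in>{r0..<q}. \<Sum>k\<in>G l. \<Sum>w\<in>W l. complex_of_real (gam l k) * \<kappa> powi k * (\<kappa> powi (sum_list w) * complex_of_real (Ew w $$ (r,c'))))"
      unfolding J_def by (rule sum_Sigma3[symmetric]) (use Gfin W_fin in auto)
    also have "\<dots> = (\<Sum>l\<in>{r0..<q}. (\<Sum>k\<in>G l. complex_of_real (gam l k) * \<kappa> powi k) * (\<Sum>w\<in>W l. \<kappa> powi (sum_list w) * complex_of_real (Ew w $$ (r,c'))))"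
      by (simp add: sum_product)
    also have "\<dots> = (\<Sum>l\<in>{r0..<q}. gamma gam l \<kappa> * (?A ^\<^sub>m l) $$ (r,c'))"
      unfolding gamma_def G_def[symmetric] using symbol_pow[OF k r c'] by simp
    finally have s2: "(\<Sum>p\<in>J. complex_of_real (b c' p) * \<kappa> powi (\<tau> p)) = (\<Sum>l\<in>{r0..<q}. gamma gam l \<kappa> * (?A ^\<^sub>m l) $$ (r,c'))" .
    show "(\<Sum>w\<in>W q. complex_of_real (Ew w $$ (r,c')) * \<kappa> powi (sum_list w)) + (\<Sum>p\<in>J. complex_of_real (b c' p) * \<kappa> powi (\<tau> p)) = 0"
      unfolding s1 s2 using ch_reduced[OF cc k r c'] .
  qed
  have "m (n + q) j $ r + (\<Sum>l\<in>{r0..<q}. \<Sum>k\<in>G l. gam l k * m (n + l) (j + k) $ r)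
      = (\<Sum>c'<q. (\<Sum>w\<in>W q. Ew w $$ (r,c') * x c' (sum_list w)) + (\<Sum>p\<in>J. b c' p * x c' (\<tau> p)))"
    unfolding e1 e2 by (simp add: sum.distrib)
  also have "\<dots> = 0" using zero by simp
  finally show ?thesis unfolding G_def .
qed

end

lemma shift_summable:
  fixes f :: "int \<Rightarrow> real"
  assumes "f summable_on UNIV"
  shows "(\<lambda>j. f (j + k)) summable_on UNIV" "(\<Sum>\<^sub>\<infinity>j. f (j + k)) = (\<Sum>\<^sub>\<infinity>j. f j)"
proof -
  have b: "bij_betw (\<lambda>j. j + k) UNIV UNIV"
    by (rule bij_betwI[of _ _ _ "\<lambda>j. j - k"]) auto
  show "(\<lambda>j. f (j + k)) summable_on UNIV" by (subst summable_on_reindex_bij_betw[OF b]) (rule assms)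
  show "(\<Sum>\<^sub>\<infinity>j. f (j + k)) = (\<Sum>\<^sub>\<infinity>j. f j)" using infsum_reindex_bij_betw[OF b, of f] by simp
qed

lemma finite_sum_summable:
  fixes f :: "'a \<Rightarrow> 'b \<Rightarrow> real"
  assumes "finite A" "\<And>a. a \<in> A \<Longrightarrow> f a summable_on B"
  shows "(\<lambda>x. \<Sum>a\<in>A. f a x) summable_on B \<and> (\<Sum>\<^sub>\<infinity>x\<in>B. \<Sum>a\<in>A. f a x) = (\<Sum>a\<in>A. \<Sum>\<^sub>\<infinity>x\<in>B. f a x)"
  using assms
proof (induction A rule: finite_induct)
  case empty then show ?case by simp
next
  case (insert a A)
  have fa: "f a summable_on B" using insert by simp
  have IH: "(\<lambda>x. \<Sum>a\<in>A. f a x) summable_on B \<and> (\<Sum>\<^sub>\<infinity>x\<in>B. \<Sum>a\<in>A. f a x) = (\<Sum>a\<in>A. \<Sum>\<^sub>\<infinity>x\<in>B. f a x)"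
    using insert by simp
  have "(\<lambda>x. f a x + (\<Sum>a\<in>A. f a x)) summable_on B" using summable_on_add[OF fa] IH by simp
  moreover have "(\<Sum>\<^sub>\<infinity>x\<in>B. f a x + (\<Sum>a\<in>A. f a x)) = (\<Sum>\<^sub>\<infinity>x\<in>B. f a x) + (\<Sum>a\<in>A. \<Sum>\<^sub>\<infinity>x\<in>B. f a x)"
    using infsum_add[OF fa] IH by simp
  ultimately show ?case using insert by simp
qed

context lbm
begin

lemma vsq_q: "dim_vec v = q \<Longrightarrow> vsq v = (\<Sum>r<q. (v $ r)^2)"
  unfolding vsq_def by simp

lemma vsq_nonneg: "vsq v \<ge> 0" unfolding vsq_def by (simp add: sum_nonneg)

lemma comp_le_vsq: "dim_vec v = q \<Longrightarrow> r < q \<Longrightarrow> (v $ r)^2 \<le> vsq v"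
  unfolding vsq_q by (rule member_le_sum) auto

definition "Emax = (\<Sum>k\<in>Ks. \<Sum>r<q. \<Sum>c'<q. (E k $$ (r,c'))^2)"
definition "B1 = real q * real (card (Ks \<times> {..<q})) * Emax"
definition "B = max 1 (B1 * real (card Ks))"

lemma Emax_ge: "k \<in> Ks \<Longrightarrow> r < q \<Longrightarrow> c' < q \<Longrightarrow> (E k $$ (r,c'))^2 \<le> Emax"
proof -
  assume k: "k \<in> Ks" and r: "r < q" and c: "c' < q"
  have "(E k $$ (r,c'))^2 \<le> (\<Sum>c''<q. (E k $$ (r,c''))^2)" using c by (intro member_le_sum) auto
  also have "\<dots> \<le> (\<Sum>r'<q. \<Sum>c''<q. (E k $$ (r',c''))^2)" using r by (intro member_le_sum) (auto intro: sum_nonneg)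
  also have "\<dots> \<le> Emax" unfolding Emax_def using k Ks_fin by (intro member_le_sum) (auto intro!: sum_nonneg)
  finally show ?thesis .
qed

lemma Emax_nonneg: "Emax \<ge> 0" unfolding Emax_def by (auto intro!: sum_nonneg)
lemma B1_nonneg: "B1 \<ge> 0" unfolding B1_def using Emax_nonneg by simp
lemma B_ge1: "B \<ge> 1" unfolding B_def by simp

lemma pointwise_step:
  fixes m :: "nat \<Rightarrow> int \<Rightarrow> real vec"
  assumes m: "lbm_sol m"
  shows "vsq (m (Suc n) j) \<le> B1 * (\<Sum>k\<in>Ks. vsq (m n (j + k)))"
proof -
  let ?P = "Ks \<times> {..<q}"
  let ?V = "\<Sum>k\<in>Ks. vsq (m n (j + k))"
  have Pfin: "finite ?P" using Ks_fin by simp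
  have comp: "(m (Suc n) j $ r)^2 \<le> real (card ?P) * Emax * ?V" if r: "r < q" for r
  proof -
    define F where "F p = E (fst p) $$ (r, snd p) * m n (j + fst p) $ snd p" for p
    define G where "G p = (m n (j + fst p) $ snd p)^2" for p
    have eq: "m (Suc n) j $ r = (\<Sum>p\<in>?P. F p)"
      unfolding sol_step[OF m r] F_def sum.cartesian_product case_prod_unfold ..
    have 1: "(\<Sum>p\<in>?P. F p)^2 \<le> (\<Sum>p\<in>?P. (F p)^2) * real (card ?P)"
      by (rule sum_squared_le_sum_of_squares)
    have 2: "(\<Sum>p\<in>?P. (F p)^2) \<le> (\<Sum>p\<in>?P. Emax * G p)"
    proof (rule sum_mono)
      fix p assume "p \<in> ?P"
      then have e: "(E (fst p) $$ (r, snd p))^2 \<le> Emax" using Emax_ge r by (cases p) auto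
      have "(F p)^2 = (E (fst p) $$ (r, snd p))^2 * G p" unfolding F_def G_def by (simp add: power_mult_distrib)
      also have "\<dots> \<le> Emax * G p" unfolding G_def by (rule mult_right_mono[OF e]) simp
      finally show "(F p)^2 \<le> Emax * G p" .
    qed
    have 3: "(\<Sum>p\<in>?P. Emax * G p) = Emax * ?V"
    proof -
      have "(\<Sum>p\<in>?P. Emax * G p) = Emax * (\<Sum>p\<in>?P. G p)" by (rule sum_distrib_left[symmetric])
      also have "(\<Sum>p\<in>?P. G p) = (\<Sum>k\<in>Ks. \<Sum>c'<q. (m n (j + k) $ c')^2)"
        unfolding G_def by (simp add: sum.cartesian_product case_prod_unfold)
      also have "\<dots> = ?V" using vsq_q[OF sol_dim[OF m]] by simp
      finally show ?thesis .
    qed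
    have "(m (Suc n) j $ r)^2 \<le> (\<Sum>p\<in>?P. (F p)^2) * real (card ?P)" using 1 unfolding eq .
    also have "\<dots> \<le> (Emax * ?V) * real (card ?P)" using 2 3 by (intro mult_right_mono) auto
    finally show ?thesis by (simp only: mult_ac)
  qed
  have "vsq (m (Suc n) j) = (\<Sum>r<q. (m (Suc n) j $ r)^2)" using vsq_q[OF sol_dim[OF m]] .
  also have "\<dots> \<le> (\<Sum>r<q. real (card ?P) * Emax * ?V)"
    by (rule sum_mono) (use comp in auto)
  also have "\<dots> = B1 * ?V" unfolding B1_def by simp
  finally show ?thesis .
qed

lemma l2_step:
  fixes m :: "nat \<Rightarrow> int \<Rightarrow> real vec"
  assumes m: "lbm_sol m" and s0: "(\<lambda>j. vsq (m 0 j)) summable_on UNIV"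
  shows "(\<lambda>j. vsq (m n j)) summable_on UNIV \<and> (\<Sum>\<^sub>\<infinity>j. vsq (m n j)) \<le> B ^ n * (\<Sum>\<^sub>\<infinity>j. vsq (m 0 j))"
proof (induction n)
  case 0 then show ?case using s0 by simp
next
  case (Suc n)
  have sn: "(\<lambda>j. vsq (m n j)) summable_on UNIV" using Suc by simp
  have sh: "(\<lambda>j. vsq (m n (j + k))) summable_on UNIV" for k using shift_summable(1)[OF sn] .
  have fs: "(\<lambda>j. \<Sum>k\<in>Ks. vsq (m n (j + k))) summable_on UNIV \<and>
      (\<Sum>\<^sub>\<infinity>j. \<Sum>k\<in>Ks. vsq (m n (j + k))) = (\<Sum>k\<in>Ks. \<Sum>\<^sub>\<infinity>j. vsq (m n (j + k)))"
    by (rule finite_sum_summable[OF Ks_fin]) (use sh in auto)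
  have fs2: "(\<lambda>j. B1 * (\<Sum>k\<in>Ks. vsq (m n (j + k)))) summable_on UNIV"
    using fs summable_on_cmult_right by blast
  have summ: "(\<lambda>j. vsq (m (Suc n) j)) summable_on UNIV"
    by (rule summable_on_comparison_test[OF fs2]) (use pointwise_step[OF m] vsq_nonneg in auto)
  have "(\<Sum>\<^sub>\<infinity>j. vsq (m (Suc n) j)) \<le> (\<Sum>\<^sub>\<infinity>j. B1 * (\<Sum>k\<in>Ks. vsq (m n (j + k))))"
    by (rule infsum_mono[OF summ fs2]) (rule pointwise_step[OF m])
  also have "\<dots> = B1 * (\<Sum>k\<in>Ks. \<Sum>\<^sub>\<infinity>j. vsq (m n (j + k)))" using fs by (simp add: infsum_cmult_right')
  also have "\<dots> = B1 * real (card Ks) * (\<Sum>\<^sub>\<infinity>j. vsq (m n j))" using shift_summable(2)[OF sn] by simp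
  also have "\<dots> \<le> B * (\<Sum>\<^sub>\<infinity>j. vsq (m n j))"
    unfolding B_def by (rule mult_right_mono) (auto intro: infsum_nonneg vsq_nonneg)
  also have "\<dots> \<le> B * (B ^ n * (\<Sum>\<^sub>\<infinity>j. vsq (m 0 j)))"
    using Suc B_ge1 by (intro mult_left_mono) auto
  finally have "(\<Sum>\<^sub>\<infinity>j. vsq (m (Suc n) j)) \<le> B * (B ^ n * (\<Sum>\<^sub>\<infinity>j. vsq (m 0 j)))" .
  then show ?case using summ by (simp add: mult.assoc)
qed

end

context lbm
begin

lemma main:
  assumes cc: "char_coeffs q c M sr eps gam" and fd: "fd_stable q (num_s q sr) gam"
  shows "lbm_stable q c M sr eps"
proof -
  define s where "s = num_s q sr"
  have s_le: "s \<le> q - 1"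
  proof -
    have "s \<le> card {1..<q}" unfolding s_def num_s_def by (rule card_mono) auto
    then show ?thesis by simp
  qed
  have qq: "q \<ge> 2" by (rule q2)
  have r0_eq: "r0 = q - 1 - s" unfolding r0_def s_def ..
  obtain C where C: "C > 0" and H: "\<forall>dx>0. \<forall>u :: nat \<Rightarrow> int \<Rightarrow> real.
       (\<forall>l\<le>s. (\<lambda>j. (u l j)^2) summable_on UNIV) \<longrightarrow>
       (\<forall>n\<ge>s. \<forall>j. u (Suc n) j = - (\<Sum>l\<le>s. apply_shift (gam (q - l - 1)) (u (n - l)) j)) \<longrightarrow>
       (\<forall>n. (\<Sum>\<^sub>\<infinity>j. dx * (u n j)^2) \<le> C * (\<Sum>l\<le>s. \<Sum>\<^sub>\<infinity>j. dx * (u l j)^2))"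
    using fd unfolding fd_stable_def s_def[symmetric] by blast
  define C' where "C' = B ^ q * (1 + C * real (Suc s))"
  have Bq_pos: "B ^ q > 0" using B_ge1 by simp
  have C'_ge: "B ^ q \<le> C'"
  proof -
    have "1 \<le> 1 + C * real (Suc s)" using C by simp
    then have "B ^ q * 1 \<le> B ^ q * (1 + C * real (Suc s))" using Bq_pos by (intro mult_left_mono) auto
    then show ?thesis unfolding C'_def by simp
  qed
  show ?thesis unfolding lbm_stable_def
  proof (intro exI[of _ C'] conjI allI impI)
    show "C' > 0" using C'_ge Bq_pos by linarith
    fix dx :: real and m :: "nat \<Rightarrow> int \<Rightarrow> real vec" and n :: nat
    assume dx: "dx > 0" and dim0: "\<forall>j. dim_vec (m 0 j) = q"
      and sum0: "(\<lambda>j. vsq (m 0 j)) summable_on UNIV"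
      and recm: "\<forall>n j. m (Suc n) j = vec q (\<lambda>r. \<Sum>k\<in>(\<lambda>i. - c i) ` {..<q}. (Emat q c M sr eps k *\<^sub>v m n (j + k)) $ r)"
    have m: "lbm_sol m" unfolding lbm_sol_def Ks_def using dim0 recm by simp
    define S where "S t = (\<Sum>\<^sub>\<infinity>j. vsq (m t j))" for t
    have L2: "(\<lambda>j. vsq (m t j)) summable_on UNIV" "S t \<le> B ^ t * S 0" for t
      using l2_step[OF m sum0, of t] unfolding S_def by auto
    have S0: "S 0 \<ge> 0" unfolding S_def by (rule infsum_nonneg) (rule vsq_nonneg)
    have Bpow: "B ^ t \<le> B ^ q" if "t \<le> q" for t by (rule power_increasing[OF that B_ge1])
    have St: "S t \<le> B ^ q * S 0" if "t \<le> q" for t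
      using L2(2)[of t] mult_right_mono[OF Bpow[OF that] S0] by linarith
    have compsum: "(\<lambda>j. (m t j $ r)^2) summable_on UNIV" if r: "r < q" for t r
      by (rule summable_on_comparison_test[OF L2(1)[of t]]) (use comp_le_vsq[OF sol_dim[OF m] r] in auto)
    have Ssplit: "S t = (\<Sum>r<q. \<Sum>\<^sub>\<infinity>j. (m t j $ r)^2)" for t
    proof -
      have "S t = (\<Sum>\<^sub>\<infinity>j. \<Sum>r<q. (m t j $ r)^2)" unfolding S_def using vsq_q[OF sol_dim[OF m]] by simp
      also have "\<dots> = (\<Sum>r<q. \<Sum>\<^sub>\<infinity>j. (m t j $ r)^2)"
        using finite_sum_summable[of "{..<q}" "\<lambda>r j. (m t j $ r)^2" UNIV] compsum by auto
      finally show ?thesis .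
    qed
    have key: "S n \<le> C' * S 0"
    proof (cases "n < r0")
      case True
      then have "n \<le> q" unfolding r0_def by simp
      then have "S n \<le> B ^ q * S 0" by (rule St)
      also have "\<dots> \<le> C' * S 0" by (rule mult_right_mono[OF C'_ge S0])
      finally show ?thesis .
    next
      case False
      then obtain t where n: "n = t + r0" by (metis add.commute le_iff_add not_less)
      define u where "u r t j = m (t + r0) j $ r" for r t j
      have FD: "(\<Sum>\<^sub>\<infinity>j. (m n j $ r)^2) \<le> C * (\<Sum>l\<le>s. \<Sum>\<^sub>\<infinity>j. (m (l + r0) j $ r)^2)" if r: "r < q" for r
      proof -
        have a: "\<forall>l\<le>s. (\<lambda>j. (u r l j)^2) summable_on UNIV" unfolding u_def using compsum[OF r] by blast
        have b: "\<forall>n'\<ge>s. \<forall>j. u r (Suc n') j = - (\<Sum>l\<le>s. apply_shift (gam (q - l - 1)) (u r (n' - l)) j)"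
        proof (intro allI impI)
          fix n' :: nat and j :: int assume "n' \<ge> s"
          then obtain p where p: "n' = p + s" by (metis add.commute le_iff_add)
          have "Suc n' + r0 = p + q" using p r0_eq s_le qq by simp
          then have lhs: "u r (Suc n') j = m (p + q) j $ r" unfolding u_def by simp
          have "(\<Sum>l\<le>s. apply_shift (gam (q - l - 1)) (u r (n' - l)) j)
              = (\<Sum>l\<le>s. (\<lambda>l'. \<Sum>k\<in>{k. gam l' k \<noteq> 0}. gam l' k * m (p + l') (j + k) $ r) (q - 1 - l))"
          proof (rule sum.cong[OF refl])
            fix l assume "l \<in> {..s}"
            then have "l \<le> s" by simp
            then have e1: "n' - l + r0 = p + (q - 1 - l)" and e2: "q - l - 1 = q - 1 - l"
              using p r0_eq s_le qq by auto
            show "apply_shift (gam (q - l - 1)) (u r (n' - l)) j =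
                (\<lambda>l'. \<Sum>k\<in>{k. gam l' k \<noteq> 0}. gam l' k * m (p + l') (j + k) $ r) (q - 1 - l)"
              unfolding apply_shift_def u_def e1 e2 by simp
          qed
          also have "\<dots> = (\<Sum>l'\<in>{r0..<q}. \<Sum>k\<in>{k. gam l' k \<noteq> 0}. gam l' k * m (p + l') (j + k) $ r)"
            by (rule sum.reindex_bij_witness[of _ "\<lambda>l'. q - 1 - l'" "\<lambda>l. q - 1 - l"])
              (use r0_eq s_le qq in auto)
          finally have rhs: "(\<Sum>l\<le>s. apply_shift (gam (q - l - 1)) (u r (n' - l)) j)
              = (\<Sum>l'\<in>{r0..<q}. \<Sum>k\<in>{k. gam l' k \<noteq> 0}. gam l' k * m (p + l') (j + k) $ r)" .
          show "u r (Suc n') j = - (\<Sum>l\<le>s. apply_shift (gam (q - l - 1)) (u r (n' - l)) j)"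
            unfolding lhs rhs using combine[OF m cc r, of p j] by simp
        qed
        have "(\<Sum>\<^sub>\<infinity>j. 1 * (u r t j)^2) \<le> C * (\<Sum>l\<le>s. \<Sum>\<^sub>\<infinity>j. 1 * (u r l j)^2)"
          using H[rule_format, of 1 "u r"] a b by auto
        then show ?thesis unfolding u_def n by simp
      qed
      have "S n = (\<Sum>r<q. \<Sum>\<^sub>\<infinity>j. (m n j $ r)^2)" by (rule Ssplit)
      also have "\<dots> \<le> (\<Sum>r<q. C * (\<Sum>l\<le>s. \<Sum>\<^sub>\<infinity>j. (m (l + r0) j $ r)^2))"
        by (rule sum_mono) (use FD in auto)
      also have "\<dots> = C * (\<Sum>l\<le>s. S (l + r0))"
        by (simp add: Ssplit sum_distrib_left sum.swap[of _ "{..s}"])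
      also have "\<dots> \<le> C * (\<Sum>l\<le>s. B ^ q * S 0)"
        using St s_le r0_eq qq C by (intro mult_left_mono sum_mono) auto
      also have "\<dots> = B ^ q * (C * real (Suc s)) * S 0" by (simp add: mult_ac)
      also have "\<dots> \<le> C' * S 0" unfolding C'_def using S0 Bq_pos
        by (intro mult_right_mono) (auto simp: algebra_simps)
      finally show ?thesis .
    qed
    have "(\<Sum>\<^sub>\<infinity>j. dx * vsq (m n j)) = dx * S n" unfolding S_def by (rule infsum_cmult_right')
    also have "\<dots> \<le> dx * (C' * S 0)" using key dx by (intro mult_left_mono) auto
    also have "\<dots> = C' * (\<Sum>\<^sub>\<infinity>j. dx * vsq (m 0 j))" unfolding S_def by (simp add: infsum_cmult_right')
    finally show "(\<Sum>\<^sub>\<infinity>j. dx * vsq (m n j)) \<le> C' * (\<Sum>\<^sub>\<infinity>j. dx * vsq (m 0 j))" .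
  qed
qed

end

lemma part1: "\<forall>q c M sr eps gam. lbm_params q c M sr eps \<longrightarrow> char_coeffs q c M sr eps gam \<longrightarrow>
            fd_stable q (num_s q sr) gam \<longrightarrow> lbm_stable q c M sr eps"
  using lbm.main unfolding lbm_def by blast


definition ex_sr :: "nat \<Rightarrow> real" where "ex_sr i = 2"
definition ex_eps :: "nat \<Rightarrow> real" where "ex_eps i = (if i = 0 then 1 else 0)"
definition ex_c :: "nat \<Rightarrow> int" where "ex_c i = 0"
definition ex_gam :: "nat \<Rightarrow> int \<Rightarrow> real" where
  "ex_gam l k = (if k = 0 then (if l = 0 then -1 else if l = 1 then -1 else if l = 2 then 1 else 0) else 0)"

lemma minv_one: "minv n (1\<^sub>m n) = 1\<^sub>m n"
proof -
  have ex: "\<exists>B. B \<in> carrier_mat n n \<and> 1\<^sub>m n * B = 1\<^sub>m n \<and> B * 1\<^sub>m n = (1\<^sub>m n :: real mat)"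
    by (intro exI[of _ "1\<^sub>m n"]) auto
  have "minv n (1\<^sub>m n) \<in> carrier_mat n n \<and> 1\<^sub>m n * minv n (1\<^sub>m n) = 1\<^sub>m n"
    unfolding minv_def by (rule someI2_ex[OF ex]) auto
  then show ?thesis by auto
qed

lemma ex_K: "Kmat 3 ex_sr ex_eps = mat 3 3 (\<lambda>(i,j). if i = j then (if i = 0 then 1 else -1) else 0)"
  unfolding Kmat_def ex_sr_def ex_eps_def by (rule eq_matI) auto

lemma ex_params: "lbm_params 3 ex_c (1\<^sub>m 3) ex_sr ex_eps"
  unfolding lbm_params_def ex_sr_def ex_eps_def invertible_mat_def inverts_mat_def
  by (auto intro!: exI[of _ "1\<^sub>m 3"])

lemma ex_Ehat: "Ehat 3 ex_c (1\<^sub>m 3) ex_sr ex_eps \<kappa> = mat 3 3 (\<lambda>(i,j). if i = j then (if i = 0 then 1 else -1) else 0)"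
proof -
  have d: "mat 3 3 (\<lambda>(i,j). if i = j then \<kappa> powi (- ex_c i) else 0) = (1\<^sub>m 3 :: complex mat)"
    by (rule eq_matI) (auto simp: ex_c_def)
  have o: "map_mat complex_of_real (1\<^sub>m 3) = 1\<^sub>m 3" by (rule eq_matI) auto
  show ?thesis unfolding Ehat_def d minv_one ex_K o
    by (rule eq_matI) auto
qed

lemma ex_char: "char_coeffs 3 ex_c (1\<^sub>m 3) ex_sr ex_eps ex_gam"
proof -
  have fin: "finite {k. ex_gam l k \<noteq> 0}" for l
    by (rule finite_subset[of _ "{0}"]) (auto simp: ex_gam_def split: if_splits)
  have S: "l < 3 \<Longrightarrow> {k. ex_gam l k \<noteq> 0} = {0}" for l
    by (auto simp: ex_gam_def split: if_splits)
  have det: "det (z \<cdot>\<^sub>m 1\<^sub>m 3 - Ehat 3 ex_c (1\<^sub>m 3) ex_sr ex_eps \<kappa>) = (z - 1) * (z + 1) * (z + 1)" for z \<kappa>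
  proof -
    let ?A = "z \<cdot>\<^sub>m 1\<^sub>m 3 - Ehat 3 ex_c (1\<^sub>m 3) ex_sr ex_eps \<kappa>"
    have A: "?A \<in> carrier_mat 3 3" unfolding ex_Ehat by auto
    have ut: "upper_triangular ?A" unfolding ex_Ehat upper_triangular_def by auto
    have "det ?A = prod_list (diag_mat ?A)" by (rule det_upper_triangular[OF ut A])
    also have "diag_mat ?A = [z - 1, z + 1, z + 1]"
      unfolding diag_mat_def ex_Ehat by (simp add: upt_rec)
    finally show ?thesis by simp
  qed
  show ?thesis unfolding char_coeffs_def
  proof (intro conjI allI impI)
    fix l show "finite {k. ex_gam l k \<noteq> 0}" by (rule fin)
  next
    fix \<kappa> z :: complex
    have "(\<Sum>l<3. (\<Sum>k\<in>{k. ex_gam l k \<noteq> 0}. complex_of_real (ex_gam l k) * \<kappa> powi k) * z ^ l)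
        = (\<Sum>l<3. complex_of_real (ex_gam l 0) * z ^ l)"
      by (rule sum.cong) (auto simp: S)
    also have "\<dots> = -1 - z + z^2" by (simp add: numeral_3_eq_3 ex_gam_def power2_eq_square)
    finally show "det (z \<cdot>\<^sub>m 1\<^sub>m 3 - Ehat 3 ex_c (1\<^sub>m 3) ex_sr ex_eps \<kappa>) =
        z ^ 3 + (\<Sum>l<3. (\<Sum>k\<in>{k. ex_gam l k \<noteq> 0}. complex_of_real (ex_gam l k) * \<kappa> powi k) * z ^ l)"
      unfolding det by (simp add: algebra_simps power2_eq_square power3_eq_cube)
  qed
qed

lemma ex_Emat: "Emat 3 ex_c (1\<^sub>m 3) ex_sr ex_eps 0 = mat 3 3 (\<lambda>(i,j). if i = j then (if i = 0 then 1 else -1) else 0)"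
proof -
  have d: "mat 3 3 (\<lambda>(i,j). if i = j \<and> ex_c i = - 0 then 1 else 0) = (1\<^sub>m 3 :: real mat)"
    by (rule eq_matI) (auto simp: ex_c_def)
  show ?thesis unfolding Emat_def d minv_one ex_K
    by (rule eq_matI) auto
qed

lemma ex_Kset: "(\<lambda>i. - ex_c i) ` {..<3} = {0}"
  unfolding ex_c_def by (auto intro: image_eqI[of _ _ 0])

lemma ex_step:
  assumes "dim_vec v = 3"
  shows "vsq (vec 3 (\<lambda>r. (mat 3 3 (\<lambda>(i,j). if i = j then (if i = 0 then 1 else -1) else (0::real)) *\<^sub>v v) $ r)) = vsq v"
  using assms unfolding vsq_def
  by (simp add: numeral_3_eq_3 scalar_prod_def mult_mat_vec_def row_def)

lemma ex_lbm_stable: "lbm_stable 3 ex_c (1\<^sub>m 3) ex_sr ex_eps"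
  unfolding lbm_stable_def
proof (intro exI[of _ 1] conjI allI impI)
  fix dx :: real and m :: "nat \<Rightarrow> int \<Rightarrow> real vec"
  assume dim0: "\<forall>j. dim_vec (m 0 j) = 3"
    and rec: "\<forall>n j. m (Suc n) j = vec 3 (\<lambda>r. \<Sum>k\<in>(\<lambda>i. - ex_c i) ` {..<3}. (Emat 3 ex_c (1\<^sub>m 3) ex_sr ex_eps k *\<^sub>v m n (j + k)) $ r)"
  have "\<forall>j. dim_vec (m n j) = 3 \<and> vsq (m n j) = vsq (m 0 j)" for n
  proof (induction n)
    case 0 then show ?case using dim0 by auto
  next
    case (Suc n)
    show ?case
    proof
      fix j
      have "m (Suc n) j = vec 3 (\<lambda>r. (mat 3 3 (\<lambda>(i,j). if i = j then (if i = 0 then 1 else -1) else (0::real)) *\<^sub>v m n j) $ r)"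
        using rec by (simp add: ex_Kset ex_Emat)
      then show "dim_vec (m (Suc n) j) = 3 \<and> vsq (m (Suc n) j) = vsq (m 0 j)"
        using ex_step Suc by simp
    qed
  qed
  then have "(\<lambda>j. dx * vsq (m n j)) = (\<lambda>j. dx * vsq (m 0 j))" for n by auto
  then show "(\<Sum>\<^sub>\<infinity>j. dx * vsq (m n j)) \<le> 1 * (\<Sum>\<^sub>\<infinity>j. dx * vsq (m 0 j))" for n
    by (metis order_refl mult_1)
qed simp

lemma num_s_ex: "num_s 3 ex_sr = 2"
proof -
  have "{l. 1 \<le> l \<and> l < (3::nat) \<and> ex_sr l \<noteq> 1} = {1,2}" by (auto simp: ex_sr_def)
  then show ?thesis unfolding num_s_def by simp
qed

lemma single_summable: "(\<lambda>j::int. if j = 0 then a else (0::real)) summable_on UNIV"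
  by (rule finite_nonzero_values_imp_summable_on) (rule finite_subset[of _ "{0}"], auto)

lemma single_infsum: "(\<Sum>\<^sub>\<infinity>j::int. if j = 0 then a else (0::real)) = a"
proof -
  have "(\<Sum>\<^sub>\<infinity>j::int. if j = 0 then a else (0::real)) = (\<Sum>\<^sub>\<infinity>j\<in>{0::int}. if j = 0 then a else (0::real))"
    by (rule infsum_cong_neutral) auto
  then show ?thesis by simp
qed

lemma ex_not_fd: "\<not> fd_stable 3 (num_s 3 ex_sr) ex_gam"
proof
  assume "fd_stable 3 (num_s 3 ex_sr) ex_gam"
  then obtain C where C: "C > 0" and H: "\<forall>dx>0. \<forall>u :: nat \<Rightarrow> int \<Rightarrow> real.
       (\<forall>l\<le>2. (\<lambda>j. (u l j)^2) summable_on UNIV) \<longrightarrow>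
       (\<forall>n\<ge>2. \<forall>j. u (Suc n) j = - (\<Sum>l\<le>2. apply_shift (ex_gam (3 - l - 1)) (u (n - l)) j)) \<longrightarrow>
       (\<forall>n. (\<Sum>\<^sub>\<infinity>j. dx * (u n j)^2) \<le> C * (\<Sum>l\<le>2. \<Sum>\<^sub>\<infinity>j. dx * (u l j)^2))"
    unfolding fd_stable_def num_s_ex by blast
  define u :: "nat \<Rightarrow> int \<Rightarrow> real" where "u n j = (if j = 0 then (-1)^n * real n else 0)" for n j
  have m1: "((-1::real)^l)^2 = 1" for l by (induct l) (auto simp: power2_eq_square)
  have sq: "(\<lambda>j. (u l j)^2) = (\<lambda>j. if j = 0 then (real l)^2 else 0)" for l
    by (auto simp: u_def fun_eq_iff power_mult_distrib m1)
  have sq1: "(\<lambda>j. 1 * (u l j)^2) = (\<lambda>j. if j = 0 then (real l)^2 else 0)" for l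
    using sq[of l] by simp
  have summ: "\<forall>l\<le>2. (\<lambda>j. (u l j)^2) summable_on UNIV"
    unfolding sq using single_summable by blast
  have S: "l < 3 \<Longrightarrow> {k. ex_gam l k \<noteq> 0} = {0}" for l
    by (auto simp: ex_gam_def split: if_splits)
  have ash: "l \<le> 2 \<Longrightarrow> apply_shift (ex_gam (2 - l)) w j = ex_gam (2 - l) 0 * w j" for l w j
    unfolding apply_shift_def using S[of "2 - l"] by simp
  have recu: "\<forall>n\<ge>2. \<forall>j. u (Suc n) j = - (\<Sum>l\<le>2. apply_shift (ex_gam (3 - l - 1)) (u (n - l)) j)"
  proof (intro allI impI)
    fix n :: nat and j :: int assume n: "n \<ge> 2"
    then obtain p where p: "n = p + 2" by (metis add.commute le_Suc_ex)
    have "(\<Sum>l\<le>2. apply_shift (ex_gam (3 - l - 1)) (u (n - l)) j) = (\<Sum>l\<le>2. ex_gam (3 - l - 1) 0 * u (n - l) j)"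
      by (rule sum.cong) (auto simp: ash)
    also have "\<dots> = u n j - u (n - 1) j - u (n - 2) j"
      by (simp add: numeral_2_eq_2 ex_gam_def)
    finally have E: "(\<Sum>l\<le>2. apply_shift (ex_gam (3 - l - 1)) (u (n - l)) j) = u n j - u (n - 1) j - u (n - 2) j" .
    have "u (Suc n) j = - (u n j - u (n - 1) j - u (n - 2) j)"
      unfolding p by (simp add: u_def algebra_simps)
    then show "u (Suc n) j = - (\<Sum>l\<le>2. apply_shift (ex_gam (3 - l - 1)) (u (n - l)) j)"
      using E by simp
  qed
  have B: "\<forall>n. (\<Sum>\<^sub>\<infinity>j. 1 * (u n j)^2) \<le> C * (\<Sum>l\<le>2. \<Sum>\<^sub>\<infinity>j. 1 * (u l j)^2)"
    using H[rule_format, of 1 u] summ recu by auto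
  have rhs: "(\<Sum>l\<le>2. \<Sum>\<^sub>\<infinity>j. 1 * (u l j)^2) = 5"
    unfolding sq1 single_infsum by (simp add: numeral_2_eq_2)
  define n where "n = nat \<lceil>5 * C\<rceil> + 1"
  have "real n > 5 * C" unfolding n_def by linarith
  moreover have "real n \<le> (real n)^2" using n_def by (simp add: power2_eq_square)
  moreover have "(\<Sum>\<^sub>\<infinity>j. 1 * (u n j)^2) = (real n)^2" unfolding sq1 single_infsum ..
  ultimately show False using B[rule_format, of n] unfolding rhs by linarith
qed


theorem mainTheorem1:
  shows "(\<forall>q c M sr eps gam. lbm_params q c M sr eps \<longrightarrow> char_coeffs q c M sr eps gam \<longrightarrow>
            fd_stable q (num_s q sr) gam \<longrightarrow> lbm_stable q c M sr eps)
       \<and> (\<exists>q c M sr eps gam. lbm_params q c M sr eps \<and> char_coeffs q c M sr eps gam \<and>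
            lbm_stable q c M sr eps \<and> \<not> fd_stable q (num_s q sr) gam)"
proof (rule conjI)
  show "\<forall>q c M sr eps gam. lbm_params q c M sr eps \<longrightarrow> char_coeffs q c M sr eps gam \<longrightarrow>
            fd_stable q (num_s q sr) gam \<longrightarrow> lbm_stable q c M sr eps" by (rule part1)
  show "\<exists>q c M sr eps gam. lbm_params q c M sr eps \<and> char_coeffs q c M sr eps gam \<and>
            lbm_stable q c M sr eps \<and> \<not> fd_stable q (num_s q sr) gam"
    using ex_params ex_char ex_lbm_stable ex_not_fd by blast
qed

end
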